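(* Let $K\ge 2$, $a\ge 1$, $b\ge 1$ be integers and $M\ge 0$. For the $(K,a,b)$ coded caching problem for location-based content with cache size $M$: if $K$ is even then $R^\star_{\rm u}\le 2R^\star$, and if $K$ is odd then $R^\star_{\rm u}\le 3R^\star$.
   Context: For integers $x\le y$, $[x:y]=\{x,x+1,\dots,y\}$ and $[n]=[1:n]$. For integers $c$ and $m\ge1$, $\langle c\rangle_m$ denotes the unique element of $\{1,\dots,m\}$ congruent to $c$ modulo $m$. The $(K,a,b)$ coded caching problem for location-based content: a server has $N=K(a+b)$ files $W_1,\dots,W_N$, each consisting of $B$ independent uniformly distributed bits (any subpacketization of files is allowed). There are $K$ cache nodes, each storing $MB$ bits, and $K$ users, user $k$ having free access to cache node $k$ only. For $k\in[K]$ define $\mathcal D_{k,1}=[(k-1)(a+b)+1:ka+(k-1)b]$, $\mathcal D_{k,2}=[ka+(k-1)b+1:k(a+b)]$, $\mathcal D_{k,3}=\mathcal D_{\langle k+1\rangle_K,1}$, and $\mathcal D_k=\mathcal D_{k,1}\cup\mathcal D_{k,2}\cup\mathcal D_{k,3}$. A scheme consists of: placement functions $Z_k=\phi_k(W_1,\dots,W_N)\in\{0,1\}^{MB}$ for $k\in[K]$, chosen without knowledge of demands; for every demand vector $\mathbf d=(d_1,\dots,d_K)\in\mathcal D_1\times\cdots\times\mathcal D_K$, a transmitted message $X=\psi(\mathbf d,W_1,\dots,W_N)\in\{0,1\}^{RB}$ broadcast to all users; and decoding functions such that, for every such $\mathbf d$ and every $k$, user $k$ recovers $W_{d_k}$ exactly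 from $(\mathbf d,Z_k,X)$. The number $R$ is the (worst-case) load of the scheme. The optimal load $R^\star$ is the infimum of $R$ over all schemes (and all $B$). The placement is uncoded if each $Z_k$ consists of a subset of the bits of the files copied directly; $R^\star_{\rm u}$ is the infimum of loads over schemes with uncoded placement. *)

theory Defs
  imports Complex_Main
begin

text \<open>Cyclic representative: the unique element of {1..m} congruent to c mod m.\<close>
definition cyc :: "int \<Rightarrow> int \<Rightarrow> int" where
  "cyc c m = (c - 1) mod m + 1"

definition nfiles :: "nat \<Rightarrow> nat \<Rightarrow> nat \<Rightarrow> nat" where
  "nfiles K a b = K * (a + b)"

definition Dk1 :: "nat \<Rightarrow> nat \<Rightarrow> nat \<Rightarrow> nat set" where
  "Dk1 a b k = {(k - 1) * (a + b) + 1 .. k * a + (k - 1) * b}"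

definition Dk2 :: "nat \<Rightarrow> nat \<Rightarrow> nat \<Rightarrow> nat set" where
  "Dk2 a b k = {k * a + (k - 1) * b + 1 .. k * (a + b)}"

definition Dk3 :: "nat \<Rightarrow> nat \<Rightarrow> nat \<Rightarrow> nat \<Rightarrow> nat set" where
  "Dk3 K a b k = Dk1 a b (nat (cyc (int k + 1) (int K)))"

definition Dem :: "nat \<Rightarrow> nat \<Rightarrow> nat \<Rightarrow> nat \<Rightarrow> nat set" where
  "Dem K a b k = Dk1 a b k \<union> Dk2 a b k \<union> Dk3 K a b k"

definition libs :: "nat \<Rightarrow> nat \<Rightarrow> (nat \<Rightarrow> bool list) set" where
  "libs N B = {w. \<forall>i. (i \<in> {1..N} \<longrightarrow> length (w i) = B) \<and> (i \<notin> {1..N} \<longrightarrow> w i = [])}"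

definition valid_scheme ::
  "nat \<Rightarrow> nat \<Rightarrow> nat \<Rightarrow> real \<Rightarrow> nat \<Rightarrow> nat \<Rightarrow> (nat \<Rightarrow> (nat \<Rightarrow> bool list) \<Rightarrow> bool list) \<Rightarrow> bool"
where
  "valid_scheme K a b M B L phi \<longleftrightarrow>
     B > 0 \<and>
     (\<forall>k\<in>{1..K}. \<exists>C::nat. real C \<le> M * real B \<and>
         (\<forall>w\<in>libs (nfiles K a b) B. length (phi k w) = C)) \<and>
     (\<exists>(psi :: (nat \<Rightarrow> nat) \<Rightarrow> (nat \<Rightarrow> bool list) \<Rightarrow> bool list)
        (dec :: nat \<Rightarrow> (nat \<Rightarrow> nat) \<Rightarrow> bool list \<Rightarrow> bool list \<Rightarrow> bool list).
        \<forall>d. (\<forall>k\<in>{1..K}. d k \<in> Dem K a b k) \<longrightarrow>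
          (\<forall>w\<in>libs (nfiles K a b) B.
              length (psi d w) = L \<and>
              (\<forall>k\<in>{1..K}. dec k d (phi k w) (psi d w) = w (d k))))"

text \<open>Uncoded placement: each cache is a fixed list of bits (file index, bit position) copied directly.\<close>
definition uncoded_placement ::
  "nat \<Rightarrow> nat \<Rightarrow> nat \<Rightarrow> nat \<Rightarrow> (nat \<Rightarrow> (nat \<Rightarrow> bool list) \<Rightarrow> bool list) \<Rightarrow> bool"
where
  "uncoded_placement K a b B phi \<longleftrightarrow>
     (\<exists>P :: nat \<Rightarrow> (nat \<times> nat) list. \<forall>k\<in>{1..K}.
        set (P k) \<subseteq> {1..nfiles K a b} \<times> {..<B} \<and>
        (\<forall>w\<in>libs (nfiles K a b) B. phi k w = map (\<lambda>(i, j). w i ! j) (P k)))"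

definition Rstar :: "nat \<Rightarrow> nat \<Rightarrow> nat \<Rightarrow> real \<Rightarrow> real" where
  "Rstar K a b M = Inf {real L / real B | B L. \<exists>phi. valid_scheme K a b M B L phi}"

definition Rstar_u :: "nat \<Rightarrow> nat \<Rightarrow> nat \<Rightarrow> real \<Rightarrow> real" where
  "Rstar_u K a b M = Inf {real L / real B | B L. \<exists>phi. valid_scheme K a b M B L phi \<and>
                                                      uncoded_placement K a b B phi}"

end

theory Submission
  imports Defs
begin


lemma cyc_range: "(m::int) > 0 \<Longrightarrow> 1 \<le> cyc c m \<and> cyc c m \<le> m"
  unfolding cyc_def by (smt (verit) pos_mod_bound pos_mod_sign)

lemma card_Dk1: "card (Dk1 a b k) \<le> a"
  unfolding Dk1_def by (cases k) (auto simp: algebra_simps)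

lemma card_Dk2: "card (Dk2 a b k) \<le> b"
  unfolding Dk2_def by (cases k) (auto simp: algebra_simps)

lemma finite_Dem: "finite (Dem K a b k)"
  unfolding Dem_def Dk1_def Dk2_def Dk3_def by auto

lemma card_Dem: "card (Dem K a b k) \<le> 2*a+b"
proof -
  have "card (Dem K a b k) \<le> card (Dk1 a b k \<union> Dk2 a b k) + card (Dk3 K a b k)"
    unfolding Dem_def by (rule card_Un_le)
  also have "\<dots> \<le> card (Dk1 a b k) + card (Dk2 a b k) + card (Dk3 K a b k)"
    using card_Un_le by simp
  finally show ?thesis using card_Dk1[of a b k] card_Dk2[of a b k] card_Dk1[of a b "nat (cyc (int k + 1) (int K))"]
    unfolding Dk3_def by linarith
qed

lemma Dk1_sub: "1 \<le> k \<Longrightarrow> k \<le> K \<Longrightarrow> Dk1 a b k \<subseteq> {1..nfiles K a b}"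
proof -
  assume "1 \<le> k" "k \<le> K"
  then obtain m where m: "k = Suc m" by (cases k) auto
  have "k * a + m * b \<le> K * a + K * b" using \<open>k \<le> K\<close> m
    by (intro add_mono mult_le_mono1) auto
  then show ?thesis unfolding Dk1_def nfiles_def m by (auto simp: algebra_simps)
qed

lemma Dk2_sub: "1 \<le> k \<Longrightarrow> k \<le> K \<Longrightarrow> Dk2 a b k \<subseteq> {1..nfiles K a b}"
proof -
  assume "1 \<le> k" "k \<le> K"
  have "k * (a+b) \<le> K * (a+b)" using \<open>k \<le> K\<close> by (intro mult_le_mono1) auto
  then show ?thesis unfolding Dk2_def nfiles_def by auto
qed

lemma Dem_sub: "1 \<le> k \<Longrightarrow> k \<le> K \<Longrightarrow> Dem K a b k \<subseteq> {1..nfiles K a b}"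
proof -
  assume h: "1 \<le> k" "k \<le> K"
  have "1 \<le> cyc (int k + 1) (int K) \<and> cyc (int k + 1) (int K) \<le> int K"
    using cyc_range[of "int K"] h by auto
  then have "1 \<le> nat (cyc (int k + 1) (int K))" "nat (cyc (int k + 1) (int K)) \<le> K" by auto
  then show ?thesis unfolding Dem_def Dk3_def using Dk1_sub Dk2_sub h by blast
qed

lemma concat_eq_lengths: "map length xs = map length ys \<Longrightarrow> concat xs = concat ys \<Longrightarrow> xs = ys"
proof (induction xs arbitrary: ys)
  case Nil then show ?case by simp
next
  case (Cons x xs)
  then obtain y ys' where ys: "ys = y # ys'" by (cases ys) auto
  with Cons show ?case by auto
qed

lemma count_le:
  fixes h :: "bool list \<Rightarrow> bool list"
  assumes "inj_on h {v. length v = m}" "\<And>v. length v = m \<Longrightarrow> length (h v) = n"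
  shows "m \<le> n"
proof -
  have "card {v::bool list. length v = m} \<le> card {v::bool list. length v = n}"
    apply (rule card_inj_on_le[OF assms(1)])
    using assms(2) finite_lists_length_eq[of "UNIV::bool set" n] by auto
  moreover have "card {v::bool list. length v = k} = 2 ^ k" for k
    using card_lists_length_eq[of "UNIV::bool set" k] by simp
  ultimately have "(2::nat) ^ m \<le> 2 ^ n" by simp
  then show ?thesis by simp
qed

lemma dec_exists:
  assumes "\<forall>d. Q d \<longrightarrow> (\<forall>k\<in>I. \<forall>w\<in>A. \<forall>w'\<in>A. phi k w = phi k w' \<and> psi d w = psi d w' \<longrightarrow> w (d k) = w' (d k))"
  shows "\<exists>dec. \<forall>d. Q d \<longrightarrow> (\<forall>w\<in>A. \<forall>k\<in>I. dec k d (phi k w) (psi d w) = w (d k))"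
proof -
  define dec where "dec = (\<lambda>k d z x. SOME y. \<exists>w\<in>A. phi k w = z \<and> psi d w = x \<and> y = w (d k))"
  have "\<forall>d. Q d \<longrightarrow> (\<forall>w\<in>A. \<forall>k\<in>I. dec k d (phi k w) (psi d w) = w (d k))"
  proof (intro allI impI ballI)
    fix d w k assume q: "Q d" and w: "w \<in> A" and k: "k \<in> I"
    show "dec k d (phi k w) (psi d w) = w (d k)"
      unfolding dec_def
      apply (rule someI2[where a = "w (d k)"])
      using w apply blast
      using assms q k w by metis
  qed
  then show ?thesis by blast
qed


lemma achieve:
  assumes K: "K \<ge> 2" and ab: "a \<ge> 1" "b \<ge> 1" and B: "B > 0" and c: "c \<le> B"
    and cM: "real (c * (2*a+b)) \<le> M * real B"
  shows "\<exists>phi. valid_scheme K a b M B (K*(B-c)) phi \<and> uncoded_placement K a b B phi"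
proof -
  define P where "P = (\<lambda>k. concat (map (\<lambda>f. map (\<lambda>j. (f,j)) [0..<c]) (sorted_list_of_set (Dem K a b k))))"
  define phi where "phi = (\<lambda>k (w::nat \<Rightarrow> bool list). map (\<lambda>(i, j). w i ! j) (P k))"
  define psi where "psi = (\<lambda>(d::nat\<Rightarrow>nat) (w::nat \<Rightarrow> bool list). map (\<lambda>n. w (d (n div (B-c) + 1)) ! (c + n mod (B-c))) [0..<K*(B-c)])"
  have setP: "set (P k) = Dem K a b k \<times> {..<c}" for k
    unfolding P_def using finite_Dem by auto
  have lenP: "length (P k) = c * card (Dem K a b k)" for k
  proof -
    have "length (P k) = sum_list (map (\<lambda>f. c) (sorted_list_of_set (Dem K a b k)))"
      unfolding P_def by (simp add: length_concat o_def)
    also have "\<dots> = c * card (Dem K a b k)"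
      by (simp add: sum_list_triv)
    finally show ?thesis .
  qed
  have unc: "uncoded_placement K a b B phi"
    unfolding uncoded_placement_def
    apply (intro exI[of _ P] ballI conjI)
    subgoal for k unfolding setP using Dem_sub[of k K a b] c by (intro Sigma_mono) auto
    subgoal by (simp add: phi_def)
    done
  have det: "\<forall>d. (\<forall>k\<in>{1..K}. d k \<in> Dem K a b k) \<longrightarrow> (\<forall>k\<in>{1..K}. \<forall>w\<in>libs (nfiles K a b) B. \<forall>w'\<in>libs (nfiles K a b) B.
      phi k w = phi k w' \<and> psi d w = psi d w' \<longrightarrow> w (d k) = w' (d k))"
  proof (intro allI impI ballI)
    fix d k w w'
    assume dd: "\<forall>k\<in>{1..K}. d k \<in> Dem K a b k" and k: "k \<in> {1..K}"
      and w: "w \<in> libs (nfiles K a b) B" and w': "w' \<in> libs (nfiles K a b) B"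
      and eq: "phi k w = phi k w' \<and> psi d w = psi d w'"
    have dk: "d k \<in> {1..nfiles K a b}" using dd k Dem_sub[of k K a b] by (meson atLeastAtMost_iff subsetD)
    have lw: "length (w (d k)) = B" "length (w' (d k)) = B"
      using w w' dk unfolding libs_def by auto
    show "w (d k) = w' (d k)"
    proof (rule nth_equalityI)
      show "length (w (d k)) = length (w' (d k))" using lw by simp
      fix r assume "r < length (w (d k))"
      then have r: "r < B" using lw by simp
      show "w (d k) ! r = w' (d k) ! r"
      proof (cases "r < c")
        case True
        then have "(d k, r) \<in> set (P k)" using setP dd k by auto
        then show ?thesis using eq unfolding phi_def by (auto simp: map_eq_conv)
      next
        case False
        define n where "n = (k-1)*(B-c) + (r-c)"
        have pos: "B - c > 0" using False r by simp
        have "(k-1)*(B-c) + (r-c) < (k-1)*(B-c) + (B-c)" using False r by simp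
        also have "\<dots> = k * (B-c)" using k by (cases k) auto
        also have "\<dots> \<le> K * (B-c)" using k by (intro mult_le_mono1) auto
        finally have nlt: "n < K*(B-c)" unfolding n_def .
        have ndiv: "n div (B-c) = k-1" and nmod: "n mod (B-c) = r - c"
        proof -
          have gen: "\<And>q e m. e < (m::nat) \<Longrightarrow> (q*m + e) div m = q \<and> (q*m+e) mod m = e"
            by (simp add: add.commute)
          have "r - c < B - c" using False r by simp
          from gen[OF this, of "k-1"] show "n div (B-c) = k-1" "n mod (B-c) = r - c"
            unfolding n_def by auto
        qed
        have "psi d w ! n = psi d w' ! n" using eq by simp
        moreover have "psi d v ! n = v (d (n div (B-c) + 1)) ! (c + n mod (B-c))" for v
          unfolding psi_def using nlt by simp
        moreover have "n div (B-c) + 1 = k" "c + n mod (B-c) = r" using ndiv nmod k False by auto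
        ultimately show ?thesis by metis
      qed
    qed
  qed
  obtain dec where dec: "\<forall>d. (\<forall>k\<in>{1..K}. d k \<in> Dem K a b k) \<longrightarrow> (\<forall>w\<in>libs (nfiles K a b) B. \<forall>k\<in>{1..K}. dec k d (phi k w) (psi d w) = w (d k))"
    using dec_exists[OF det] by blast
  have "valid_scheme K a b M B (K*(B-c)) phi"
    unfolding valid_scheme_def
  proof (intro conjI ballI)
    show "B > 0" by fact
    fix k assume k: "k \<in> {1..K}"
    have "real (c * card (Dem K a b k)) \<le> real (c * (2*a+b))"
      using card_Dem[of K a b k] by (intro of_nat_mono mult_le_mono2) auto
    then show "\<exists>C. real C \<le> M * real B \<and> (\<forall>w\<in>libs (nfiles K a b) B. length (phi k w) = C)"
      using cM by (intro exI[of _ "c * card (Dem K a b k)"]) (auto simp: phi_def lenP)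
  next
    show "\<exists>(psi :: (nat \<Rightarrow> nat) \<Rightarrow> (nat \<Rightarrow> bool list) \<Rightarrow> bool list) dec. \<forall>d. (\<forall>k\<in>{1..K}. d k \<in> Dem K a b k) \<longrightarrow>
        (\<forall>w\<in>libs (nfiles K a b) B. length (psi d w) = K * (B - c) \<and>
           (\<forall>k\<in>{1..K}. dec k d (phi k w) (psi d w) = w (d k)))"
    proof -
      have "\<forall>d. (\<forall>k\<in>{1..K}. d k \<in> Dem K a b k) \<longrightarrow>
        (\<forall>w\<in>libs (nfiles K a b) B. length (psi d w) = K * (B - c) \<and>
           (\<forall>k\<in>{1..K}. dec k d (phi k w) (psi d w) = w (d k)))"
        using dec by (simp add: psi_def)
      then show ?thesis by blast
    qed
  qed
  with unc show ?thesis by blast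
qed


lemma converse:
  assumes K: "K \<ge> 2" and ab: "a \<ge> 1" "b \<ge> 1" and V: "valid_scheme K a b M B L phi"
  shows "real (K div 2) * real B * (2*a+b) \<le> real (K div 2) * M * real B + (2*a+b) * real L"
proof -
  define N where "N = nfiles K a b"
  from V have B: "B > 0" unfolding valid_scheme_def by blast
  from V have "\<forall>k\<in>{1..K}. \<exists>C::nat. real C \<le> M * real B \<and> (\<forall>w\<in>libs N B. length (phi k w) = C)"
    unfolding valid_scheme_def N_def by blast
  then obtain C where C: "\<And>k. k\<in>{1..K} \<Longrightarrow> real (C k) \<le> M * real B"
     "\<And>k w. k\<in>{1..K} \<Longrightarrow> w \<in> libs N B \<Longrightarrow> length (phi k w) = C k"
    by metis
  from V obtain psi :: "(nat \<Rightarrow> nat) \<Rightarrow> (nat \<Rightarrow> bool list) \<Rightarrow> bool list"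
     and dec :: "nat \<Rightarrow> (nat \<Rightarrow> nat) \<Rightarrow> bool list \<Rightarrow> bool list \<Rightarrow> bool list"
     where H: "\<And>d. (\<forall>k\<in>{1..K}. d k \<in> Dem K a b k) \<Longrightarrow>
          (\<forall>w\<in>libs N B. length (psi d w) = L \<and> (\<forall>k\<in>{1..K}. dec k d (phi k w) (psi d w) = w (d k)))"
    unfolding valid_scheme_def N_def by blast
  define s where "s = K div 2"
  define t where "t = 2*a+b"
  define P where "P = 2*(a+b)"
  have tP: "t < P" using ab unfolding t_def P_def by simp
  have s2K: "2*s \<le> K" unfolding s_def by simp
  define inF where "inF = (\<lambda>x. 1 \<le> x \<and> (x-1) div P < s \<and> (x-1) mod P < t)"
  define W where "W = (\<lambda>v x. if inF x then take B (drop ((((x-1) div P)*t + (x-1) mod P)*B) v)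
      else if x \<in> {1..N} then replicate B False else ([]::bool list))"
  define dd where "dd = (\<lambda>j k. if odd k \<and> k < 2*s then (k-1)*(a+b)+1+j else (k-1)*(a+b)+(1::nat))"
  define h where "h = (\<lambda>v. concat (map (\<lambda>i. phi (2*i+1) (W v)) [0..<s]) @ concat (map (\<lambda>j. psi (dd j) (W v)) [0..<t]))"
  have inF_N: "x \<in> {1..N}" if "inF x" for x
  proof -
    define i where "i = (x-1) div P"
    define j where "j = (x-1) mod P"
    have x: "x = i*P + j + 1" using that unfolding inF_def i_def j_def by simp
    have "i + 1 \<le> s" "j + 1 \<le> t" using that unfolding inF_def i_def j_def by auto
    have "i*P \<le> (s-1)*P" using \<open>i+1 \<le> s\<close> by (intro mult_le_mono1) simp
    then have "i*P + j + 1 \<le> (s-1)*P + t" using \<open>j+1 \<le> t\<close> by linarith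
    also have "\<dots> \<le> s * P"
    proof -
      obtain s' where "s = Suc s'" using \<open>i+1 \<le> s\<close> by (cases s) auto
      then show ?thesis using tP by simp
    qed
    also have "\<dots> = (2*s)*(a+b)" unfolding P_def by simp
    also have "\<dots> \<le> K * (a+b)" using s2K by (rule mult_le_mono1)
    finally show ?thesis using x unfolding N_def nfiles_def by auto
  qed
  have Wlib: "W v \<in> libs N B" if "length v = s*t*B" for v
    unfolding libs_def
  proof (intro CollectI allI conjI impI)
    fix x assume "x \<in> {1..N}"
    show "length (W v x) = B"
    proof (cases "inF x")
      case True
      define q where "q = ((x-1) div P)*t + (x-1) mod P"
      have "((x-1) div P + 1) * t \<le> s * t" using True unfolding inF_def by (intro mult_le_mono1) auto
      then have "q + 1 \<le> s * t" unfolding q_def using True unfolding inF_def by (simp add: algebra_simps)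
      then have "(q+1)*B \<le> s*t*B" by (intro mult_le_mono1)
      then have "length (take B (drop (q*B) v)) = B" using that by (simp add: algebra_simps)
      then show ?thesis using True unfolding W_def q_def by simp
    next
      case False then show ?thesis using \<open>x \<in> {1..N}\<close> unfolding W_def by simp
    qed
  next
    fix x assume "x \<notin> {1..N}"
    then show "W v x = []" using inF_N unfolding W_def by auto
  qed
  have ddDem: "\<forall>k\<in>{1..K}. dd j k \<in> Dem K a b k" if jt: "j < t" for j
  proof
    fix k assume k: "k \<in> {1..K}"
    obtain m where m: "k = Suc m" using k by (cases k) auto
    show "dd j k \<in> Dem K a b k"
    proof (cases "odd k \<and> k < 2*s")
      case True
      have ddk: "dd j k = m*(a+b)+1+j" unfolding dd_def using True m by simp
      consider "j < a" | "a \<le> j \<and> j < a+b" | "a+b \<le> j" by linarith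
      then show ?thesis
      proof cases
        case 1 then have "dd j k \<in> Dk1 a b k" unfolding Dk1_def m using ddk[unfolded m] by (simp add: algebra_simps)
        then show ?thesis unfolding Dem_def by blast
      next
        case 2 then have "dd j k \<in> Dk2 a b k" unfolding Dk2_def m using ddk[unfolded m] by (simp add: algebra_simps)
        then show ?thesis unfolding Dem_def by blast
      next
        case 3
        have kK: "k < K" using True s2K by simp
        have "cyc (int k + 1) (int K) = int k + 1" unfolding cyc_def using kK by simp
        then have nc: "nat (cyc (int k + 1) (int K)) = Suc (Suc m)" using m by simp
        have "dd j k \<in> Dk1 a b (Suc (Suc m))" unfolding ddk Dk1_def using 3 jt unfolding t_def
          by (simp add: algebra_simps)
        then show ?thesis unfolding Dem_def Dk3_def nc by blast
      qed
    next
      case False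
      have ddk: "dd j k = m*(a+b)+1" unfolding dd_def using False m by auto
      have "dd j k \<in> Dk1 a b k" unfolding Dk1_def m using ab ddk[unfolded m] by (simp add: algebra_simps)
      then show ?thesis unfolding Dem_def by blast
    qed
  qed
  have kS: "2*i+1 \<in> {1..K}" if "i < s" for i using that s2K by auto
  have mapA: "map length (map (\<lambda>i. phi (2*i+1) (W v)) [0..<s]) = map (\<lambda>i. C (2*i+1)) [0..<s]"
    if "length v = s*t*B" for v
    using C(2)[OF kS Wlib[OF that]] by simp
  have mapB: "map length (map (\<lambda>j. psi (dd j) (W v)) [0..<t]) = map (\<lambda>j. L) [0..<t]"
    if "length v = s*t*B" for v
    using H[OF ddDem] Wlib[OF that] by simp
  have lenA: "length (concat (map (\<lambda>i. phi (2*i+1) (W v)) [0..<s])) = (\<Sum>i<s. C (2*i+1))"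
    if "length v = s*t*B" for v
  proof -
    have "length (concat (map (\<lambda>i. phi (2*i+1) (W v)) [0..<s])) = sum_list (map length (map (\<lambda>i. phi (2*i+1) (W v)) [0..<s]))"
      by (simp add: length_concat)
    also have "\<dots> = sum_list (map (\<lambda>i. C (2*i+1)) [0..<s])" by (simp only: mapA[OF that])
    also have "\<dots> = (\<Sum>i<s. C (2*i+1))" by (simp add: sum_list_sum_nth atLeast0LessThan)
    finally show ?thesis .
  qed
  have lenB: "length (concat (map (\<lambda>j. psi (dd j) (W v)) [0..<t])) = t * L"
    if "length v = s*t*B" for v
  proof -
    have "length (concat (map (\<lambda>j. psi (dd j) (W v)) [0..<t])) = sum_list (map length (map (\<lambda>j. psi (dd j) (W v)) [0..<t]))"
      by (simp add: length_concat)
    also have "\<dots> = sum_list (map (\<lambda>j. L) [0..<t])" by (simp only: mapB[OF that])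
    also have "\<dots> = t * L" by (simp add: sum_list_triv)
    finally show ?thesis .
  qed
  have lenh: "length (h v) = (\<Sum>i<s. C (2*i+1)) + t*L" if "length v = s*t*B" for v
    unfolding h_def using lenA[OF that] lenB[OF that] by simp
  have inj: "inj_on h {v. length v = s*t*B}"
  proof (rule inj_onI)
    fix v v' assume v: "v \<in> {v. length v = s*t*B}" and v': "v' \<in> {v. length v = s*t*B}"
      and hv: "h v = h v'"
    then have lv: "length v = s*t*B" and lv': "length v' = s*t*B" by auto
    have "concat (map (\<lambda>i. phi (2*i+1) (W v)) [0..<s]) = concat (map (\<lambda>i. phi (2*i+1) (W v')) [0..<s])
       \<and> concat (map (\<lambda>j. psi (dd j) (W v)) [0..<t]) = concat (map (\<lambda>j. psi (dd j) (W v')) [0..<t])"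
      using hv lenA[OF lv] lenA[OF lv'] unfolding h_def by (subst (asm) append_eq_append_conv) auto
    then have eqA: "map (\<lambda>i. phi (2*i+1) (W v)) [0..<s] = map (\<lambda>i. phi (2*i+1) (W v')) [0..<s]"
      and eqB: "map (\<lambda>j. psi (dd j) (W v)) [0..<t] = map (\<lambda>j. psi (dd j) (W v')) [0..<t]"
      using concat_eq_lengths mapA[OF lv] mapA[OF lv'] mapB[OF lv] mapB[OF lv'] by metis+
    have Weq: "W v x = W v' x" if x: "inF x" for x
    proof -
      define i where "i = (x-1) div P"
      define j where "j = (x-1) mod P"
      have xij: "x = i*P + j + 1" using x unfolding inF_def i_def j_def by simp
      have iS: "i < s" and jt: "j < t" using x unfolding inF_def i_def j_def by auto
      define k where "k = 2*i+1"
      have k: "k \<in> {1..K}" using kS[OF iS] unfolding k_def .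
      have "dd j k = x" unfolding dd_def k_def xij P_def using iS by (simp add: algebra_simps)
      moreover have "phi k (W v) = phi k (W v')" using eqA iS unfolding k_def by (auto simp: map_eq_conv)
      moreover have "psi (dd j) (W v) = psi (dd j) (W v')" using eqB jt by (auto simp: map_eq_conv)
      moreover have "dec k (dd j) (phi k (W u)) (psi (dd j) (W u)) = W u (dd j k)" if "length u = s*t*B" for u
        using H[OF ddDem[OF jt]] Wlib[OF that] k by blast
      ultimately show ?thesis using lv lv' by metis
    qed
    show "v = v'"
    proof (rule nth_equalityI)
      show "length v = length v'" using lv lv' by simp
      fix p assume "p < length v"
      then have p: "p < (s*t)*B" using lv by simp
      define q where "q = p div B"
      define r where "r = p mod B"
      have Bpos: "B > 0" using B .
      have qst: "q < s*t" unfolding q_def using p Bpos by (simp add: less_mult_imp_div_less)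
      have r: "r < B" unfolding r_def using Bpos by simp
      have pqr: "p = q*B + r" unfolding q_def r_def by simp
      define i where "i = q div t"
      define j where "j = q mod t"
      have tpos: "t > 0" using ab unfolding t_def by simp
      have iS: "i < s" unfolding i_def using qst tpos by (simp add: less_mult_imp_div_less)
      have jt: "j < t" unfolding j_def using tpos by simp
      have qij: "q = i*t + j" unfolding i_def j_def by simp
      define x where "x = i*P + j + 1"
      have jP: "j < P" using jt tP by simp
      have xdiv: "(x-1) div P = i" and xmod: "(x-1) mod P = j" unfolding x_def using jP
        by (simp_all add: add.commute)
      have xF: "inF x" unfolding inF_def using xdiv xmod iS jt by (simp add: x_def)
      have "W u x = take B (drop (q*B) u)" for u
        unfolding W_def using xF xdiv xmod qij by simp
      then have "take B (drop (q*B) v) ! r = take B (drop (q*B) v') ! r" using Weq[OF xF] by simp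
      then have "drop (q*B) v ! r = drop (q*B) v' ! r" using r by simp
      moreover have "q*B \<le> length v" "q*B \<le> length v'" using pqr p lv lv' qst by auto
      ultimately show "v ! p = v' ! p" using pqr by simp
    qed
  qed
  have "s*t*B \<le> (\<Sum>i<s. C (2*i+1)) + t*L"
    by (rule count_le[OF inj lenh])
  then have "real (s*t*B) \<le> (\<Sum>i<s. real (C (2*i+1))) + real t * real L"
    by (metis of_nat_add of_nat_le_iff of_nat_mult of_nat_sum)
  also have "(\<Sum>i<s. real (C (2*i+1))) \<le> real s * (M * real B)"
    using sum_bounded_above[of "{..<s}" "\<lambda>i. real (C (2*i+1))" "M * real B"] C(1) s2K by auto
  finally show ?thesis unfolding s_def t_def by (simp add: algebra_simps)
qed


lemma arch_le:
  fixes x y :: real and K :: nat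
  assumes "\<And>B::nat. B > 0 \<Longrightarrow> x \<le> y + real K / real B"
  shows "x \<le> y"
proof (rule ccontr)
  assume "\<not> x \<le> y"
  then have d: "x - y > 0" by simp
  obtain n :: nat where n: "real K / (x - y) < real n" using reals_Archimedean2 by blast
  have "real K / (x - y) \<ge> 0" using d by simp
  then have npos: "n > 0" using n by linarith
  have "real K < real n * (x - y)" using n d by (simp add: divide_less_eq mult.commute)
  then have "real K / real n < x - y" using npos by (simp add: divide_less_eq mult.commute)
  with assms[OF npos] show False by linarith
qed

theorem theorem2:
  fixes K a b :: nat and M :: real
  assumes "K \<ge> 2" and "a \<ge> 1" and "b \<ge> 1" and "M \<ge> 0"
  shows "(even K \<longrightarrow> Rstar_u K a b M \<le> 2 * Rstar K a b M) \<and>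
         (odd K \<longrightarrow> Rstar_u K a b M \<le> 3 * Rstar K a b M)"
proof -
  define Dr :: real where "Dr = 2 * real a + real b"
  have Dpos: "Dr > 0" using assms unfolding Dr_def by simp
  define s where "s = K div 2"
  define S where "S = {real L / real B | B L. \<exists>phi. valid_scheme K a b M B L phi}"
  define U where "U = {real L / real B | B L. \<exists>phi. valid_scheme K a b M B L phi \<and> uncoded_placement K a b B phi}"
  have RS: "Rstar K a b M = Inf S" unfolding Rstar_def S_def ..
  have RU: "Rstar_u K a b M = Inf U" unfolding Rstar_u_def U_def ..
  have bU: "bdd_below U" unfolding U_def by (rule bdd_belowI[of _ 0]) auto
  obtain phi0 where phi0: "valid_scheme K a b M 1 (K*(1-0)) phi0 \<and> uncoded_placement K a b 1 phi0"
    using achieve[of K a b 1 0 M] assms by auto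
  have Sne: "S \<noteq> {}" unfolding S_def using phi0 by blast
  have S0: "Inf S \<ge> 0"
    by (rule cInf_greatest[OF Sne]) (auto simp: S_def)
  have Slb: "Inf S \<ge> real s * (1 - M / Dr)"
  proof (rule cInf_greatest[OF Sne])
    fix x assume "x \<in> S"
    then obtain B L phi where x: "x = real L / real B" and V: "valid_scheme K a b M B L phi"
      unfolding S_def by blast
    have Bpos: "B > 0" using V unfolding valid_scheme_def by blast
    have "real s * real B * Dr \<le> real s * M * real B + Dr * real L"
      using converse[OF assms(1-3) V] unfolding s_def Dr_def by simp
    then have "real s * (1 - M / Dr) * real B \<le> real L"
      using Dpos by (simp add: field_simps)
    then show "real s * (1 - M / Dr) \<le> x" unfolding x using Bpos by (simp add: field_simps)
  qed
  have Ub: "Inf U \<le> real K * (1 - M / Dr)" if MD: "M < Dr"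
  proof (rule arch_le[of _ _ K])
    fix B :: nat assume Bpos: "B > 0"
    define c where "c = nat \<lfloor>M * real B / Dr\<rfloor>"
    have c1: "real c \<le> M * real B / Dr" unfolding c_def using assms(4) Dpos
      by (simp add: of_nat_nat)
    have c2: "real c > M * real B / Dr - 1" unfolding c_def using assms(4) Dpos
      by linarith
    have "M * real B / Dr < real B" using MD Bpos Dpos by (simp add: divide_less_eq)
    then have cB: "c \<le> B" using c1 by linarith
    have "real (c * (2*a+b)) \<le> M * real B" using c1 Dpos unfolding Dr_def
      by (simp add: field_simps)
    then obtain phi where "valid_scheme K a b M B (K*(B-c)) phi \<and> uncoded_placement K a b B phi"
      using achieve[OF assms(1-3) Bpos cB] by blast
    then have "real (K*(B-c)) / real B \<in> U" unfolding U_def by blast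
    then have "Inf U \<le> real (K*(B-c)) / real B" by (rule cInf_lower[OF _ bU])
    also have "\<dots> = real K * (real B - real c) / real B" using cB by (simp add: of_nat_diff)
    also have "\<dots> \<le> real K * (real B - (M * real B / Dr - 1)) / real B"
      using c2 Bpos by (intro divide_right_mono mult_left_mono) auto
    also have "\<dots> = real K * (1 - M / Dr) + real K / real B"
      using Bpos Dpos by (simp add: field_simps)
    finally show "Inf U \<le> real K * (1 - M / Dr) + real K / real B" .
  qed
  have U0: "Inf U \<le> 0" if MD: "M \<ge> Dr"
  proof -
    have "real (1 * (2*a+b)) \<le> M * real (1::nat)" using MD unfolding Dr_def by simp
    then obtain phi where "valid_scheme K a b M 1 (K*(1-1)) phi \<and> uncoded_placement K a b 1 phi"
      using achieve[OF assms(1-3), of 1 1 M] by auto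
    then have "real (K*(1-1)) / real (1::nat) \<in> U" unfolding U_def by blast
    then show ?thesis using cInf_lower[OF _ bU] by fastforce
  qed
  show ?thesis
  proof (cases "M < Dr")
    case True
    have pos: "1 - M / Dr > 0" using True Dpos by simp
    have e: "even K \<Longrightarrow> real K = 2 * real s" unfolding s_def by auto
    have o: "odd K \<Longrightarrow> real K \<le> 3 * real s" unfolding s_def using assms(1)
      by (auto elim!: oddE)
    have "even K \<longrightarrow> Inf U \<le> 2 * Inf S"
    proof
      assume "even K"
      have "Inf U \<le> real K * (1 - M / Dr)" using Ub[OF True] .
      also have "\<dots> = 2 * (real s * (1 - M / Dr))" using e[OF \<open>even K\<close>] by simp
      also have "\<dots> \<le> 2 * Inf S" using Slb by simp
      finally show "Inf U \<le> 2 * Inf S" .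
    qed
    moreover have "odd K \<longrightarrow> Inf U \<le> 3 * Inf S"
    proof
      assume "odd K"
      have "Inf U \<le> real K * (1 - M / Dr)" using Ub[OF True] .
      also have "\<dots> \<le> (3 * real s) * (1 - M / Dr)" using o[OF \<open>odd K\<close>] pos
        by (intro mult_right_mono) auto
      also have "\<dots> \<le> 3 * Inf S" using Slb by simp
      finally show "Inf U \<le> 3 * Inf S" .
    qed
    ultimately show ?thesis unfolding RS RU by blast
  next
    case False
    then show ?thesis unfolding RS RU using U0 S0 by auto
  qed
qed

end
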